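(* Let $\Psi(x)=\sup\left\{\lfloor t\rfloor\log\left(1+\frac{x}{t^2}\right):t\geq1\right\}$ for $x\geq0$. Then \[ \Psi(x)\geq\frac{\log 5}{4}\min(x;\sqrt x)\qquad\text{for all }x\geq0. \] *)

theory Defs
  imports Complex_Main
begin

definition Psi :: "real \<Rightarrow> real" where
  "Psi x = (SUP t\<in>{1..}. of_int \<lfloor>t\<rfloor> * ln (1 + x / t^2))"

end

theory Submission
  imports Defs
begin

lemma bdd: "bdd_above ((\<lambda>t. of_int \<lfloor>t\<rfloor> * ln (1 + x / t^2)) ` {1::real..})" if "x \<ge> 0"
proof (rule bdd_aboveI2)
  fix t :: real assume "t \<in> {1..}"
  hence t: "t \<ge> 1" by simp
  have "of_int \<lfloor>t\<rfloor> * ln (1 + x / t^2) \<le> t * (x / t^2)"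
    apply (rule mult_mono)
    using t that by (auto intro!: ln_add_one_self_le_self)
  also have "\<dots> = x / t" using t by (simp add: power2_eq_square)
  also have "\<dots> \<le> x" using t that by (simp add: divide_le_eq mult_le_cancel_left1)
  finally show "of_int \<lfloor>t\<rfloor> * ln (1 + x / t^2) \<le> x" .
qed

lemma ln5: "ln (5::real) \<le> 2"
proof -
  have "(5::real) \<le> exp 2" using exp_lower_Taylor_quadratic[of "2::real"] by simp
  thus ?thesis by (metis exp_gt_zero ln_exp ln_le_cancel_iff zero_less_numeral)
qed

theorem lemma1p10:
  fixes x :: real
  assumes "x \<ge> 0"
  shows "Psi x \<ge> ln 5 / 4 * min x (sqrt x)"
proof -
  let ?f = "\<lambda>t. of_int \<lfloor>t\<rfloor> * ln (1 + x / t^2)"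
  have up: "?f t \<le> Psi x" if "t \<ge> 1" for t
    unfolding Psi_def using that by (intro cSUP_upper bdd assms) auto
  have l5: "ln 5 > (0::real)" by simp
  show ?thesis
  proof (cases "x \<le> 1")
    case True
    have m: "min x (sqrt x) = x"
    proof -
      have s1: "sqrt x \<le> 1" using True by simp
      have "x = sqrt x * sqrt x" using assms by simp
      also have "\<dots> \<le> sqrt x * 1" using s1 assms by (intro mult_left_mono) auto
      finally show ?thesis by simp
    qed
    have "ln (1 + x) \<ge> x / (1 + x)"
      using ln_le_minus_one[of "1/(1+x)"] assms by (simp add: ln_div field_simps)
    moreover have "x / (1+x) \<ge> x / 2" using True assms by (simp add: field_simps mult_left_le)
    moreover have "ln 5 / 4 * x \<le> x / 2" using mult_left_mono[OF ln5 assms] by simp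
    ultimately have "ln 5 / 4 * x \<le> ln (1 + x)" by linarith
    hence "ln 5 / 4 * x \<le> ?f 1" by simp
    with up[of 1] m show ?thesis by simp
  next
    case False
    have m: "min x (sqrt x) = sqrt x"
    proof -
      have s1: "sqrt x \<ge> 1" using False by simp
      have "x = sqrt x * sqrt x" using assms by simp
      also have "\<dots> \<ge> sqrt x * 1" using s1 by (intro mult_left_mono) auto
      finally show ?thesis by simp
    qed
    show ?thesis
    proof (cases "x \<le> 4")
      case True
      have s2: "sqrt x \<le> 2" using True real_sqrt_le_mono[of x 4] by simp
      show ?thesis
      proof (cases "x \<le> 2")
        case True
        have s3: "sqrt x \<le> 3/2" using True real_sqrt_le_mono[of x "9/4"]
          by (simp add: real_sqrt_divide)
        have "ln 5 / 4 * sqrt x \<le> ln 5 * (3/8)" using mult_left_mono[OF s3, of "ln 5 / 4"] l5 by simp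
        also have "\<dots> \<le> ln 2"
        proof -
          have "ln 5 * 3 = ln ((5::real)^3)" using ln_realpow[of "5::real" 3] by (simp del: ln_realpow)
          also have "\<dots> \<le> ln (2^8)" by simp
          also have "\<dots> = ln 2 * 8" using ln_realpow[of "2::real" 8] by (simp del: ln_realpow)
          finally show ?thesis by simp
        qed
        also have "\<dots> \<le> ln (1 + x)" using False by simp
        finally show ?thesis using up[of 1] m by simp
      next
        case False
        have "ln 5 / 4 * sqrt x \<le> ln 5 / 2" using mult_left_mono[OF s2, of "ln 5 / 4"] l5 by simp
        also have "\<dots> \<le> ln 3"
        proof -
          have "ln 5 \<le> ln (3^2::real)" by simp
          also have "\<dots> = 2 * ln 3" using ln_realpow[of "3::real" 2] by (simp del: ln_realpow)
          finally show ?thesis by simp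
        qed
        also have "\<dots> \<le> ln (1 + x)" using False by simp
        finally show ?thesis using up[of 1] m by simp
      qed
    next
      case False
      define t where "t = sqrt x / 2"
      have t1: "t \<ge> 1" using False real_sqrt_le_mono[of 4 x] unfolding t_def by simp
      have xt: "x / t^2 = 4" using False unfolding t_def by (simp add: power_divide)
      have ft: "of_int \<lfloor>t\<rfloor> \<ge> t / 2"
      proof (cases "t < 2")
        case True
        have "\<lfloor>t\<rfloor> \<ge> 1" using t1 by simp
        then show ?thesis using True by linarith
      next
        case False
        then show ?thesis using of_int_floor_le[of t] floor_correct[of t] by linarith
      qed
      have "ln 5 / 4 * sqrt x = t / 2 * ln 5" unfolding t_def by simp
      also have "\<dots> \<le> ?f t" unfolding xt using ft l5 by (simp add: mult_right_mono)
      finally show ?thesis using up[OF t1] m by simp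
    qed
  qed
qed

end
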